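(* For every integer $n\ge 0$, $$\Phi^{(3)}[a, a'; bq^n, b'; c; x, y] = \sum_{k=0}^n \begin{bmatrix} n \\ k \end{bmatrix} q^{2\binom{k}{2}} \frac{(bx)^k (a; q)_k}{(c; q)_k} \Phi^{(3)}[aq^k, a'; bq^k, b'; cq^k; x, y]$$ and $$\Phi^{(3)}[a, a'; bq^{-n}, b'; c; x, y] = \sum_{k=0}^n \begin{bmatrix} n \\ k \end{bmatrix} q^{\binom{k}{2} - nk} \frac{(-bx)^k (a; q)_k}{(c; q)_k} \Phi^{(3)}[aq^k, a'; b, b'; cq^k; x, y].$$
   Context: Let $q$ be a complex number with $0<|q|<1$. For complex $z$ and integer $m\ge 0$, $(z;q)_m=\prod_{j=0}^{m-1}(1-zq^j)$, with $(z;q)_0=1$. For integers $0\le k\le n$, $\begin{bmatrix} n \\ k \end{bmatrix}=\frac{(q;q)_n}{(q;q)_k(q;q)_{n-k}}$ is the $q$-binomial coefficient. The $q$-Appell function $\Phi^{(3)}$ is $$\Phi^{(3)}[a, a'; b, b'; c; x, y] = \sum_{m, n \geq 0} \frac{(a; q)_m (a'; q)_n (b; q)_m (b'; q)_n}{(q; q)_m (q; q)_n (c; q)_{m+n}} x^m y^n.$$ Identities are understood as identities of power series in $x,y$ (formal, or convergent for small $|x|,|y|$), with complex parameters chosen so that no denominator occurring vanishes. *)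

theory Defs
  imports "HOL-Analysis.Analysis"
begin

definition qpoch :: "complex \<Rightarrow> complex \<Rightarrow> nat \<Rightarrow> complex" where
  "qpoch z q m = (\<Prod>j<m. 1 - z * q ^ j)"

definition qbinom :: "complex \<Rightarrow> nat \<Rightarrow> nat \<Rightarrow> complex" where
  "qbinom q n k = qpoch q q n / (qpoch q q k * qpoch q q (n - k))"

definition qAppell3 ::
  "complex \<Rightarrow> complex \<Rightarrow> complex \<Rightarrow> complex \<Rightarrow> complex \<Rightarrow> complex \<Rightarrow> complex \<Rightarrow> complex \<Rightarrow> complex" where
  "qAppell3 q a a' b b' c x y =
     (\<Sum>\<^sub>\<infinity>(m, n)\<in>UNIV.
        qpoch a q m * qpoch a' q n * qpoch b q m * qpoch b' q n
        / (qpoch q q m * qpoch q q n * qpoch c q (m + n)) * x ^ m * y ^ n)"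

end

theory Submission
  imports Defs
begin

lemma prod_growth:
  fixes f :: "nat \<Rightarrow> complex" and \<rho> :: real
  assumes lim: "f \<longlonglongrightarrow> 1" and rho: "\<rho> > 1"
  shows "\<exists>C>0. \<forall>k. norm (\<Prod>j<k. f j) \<le> C * \<rho> ^ k"
proof -
  have "\<forall>\<^sub>F j in sequentially. norm (f j) < \<rho>"
    using tendsto_norm[OF lim] rho by (simp add: order_tendstoD(2))
  then obtain N where N: "\<And>j. j \<ge> N \<Longrightarrow> norm (f j) < \<rho>"
    by (auto simp: eventually_sequentially)
  define D where "D j = max 1 (norm (f j) / \<rho>)" for j
  have D1: "D j \<ge> 1" for j by (simp add: D_def)
  have DN: "j \<ge> N \<Longrightarrow> D j = 1" for j using N[of j] rho by (simp add: D_def)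
  have fD: "norm (f j) \<le> \<rho> * D j" for j
  proof -
    have "norm (f j) / \<rho> \<le> D j" by (simp add: D_def)
    then show ?thesis using rho by (simp add: field_simps)
  qed
  define C where "C = (\<Prod>j<N. D j)"
  have Cpos: "C > 0" unfolding C_def using D1 by (meson prod_pos less_le_trans zero_less_one)
  have "norm (\<Prod>j<k. f j) \<le> C * \<rho> ^ k" for k
  proof -
    have "norm (\<Prod>j<k. f j) = (\<Prod>j<k. norm (f j))" by (simp add: prod_norm)
    also have "\<dots> \<le> (\<Prod>j<k. \<rho> * D j)"
      by (intro prod_mono) (auto simp: fD)
    also have "\<dots> = \<rho> ^ k * (\<Prod>j<k. D j)" by (simp add: prod.distrib)
    also have "(\<Prod>j<k. D j) \<le> C"
    proof -
      have "(\<Prod>j<k. D j) = (\<Prod>j\<in>{..<k} \<inter> {..<N}. D j)"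
        by (rule prod.mono_neutral_right) (auto, metis DN not_le)
      also have "\<dots> \<le> C" unfolding C_def
        by (rule prod_mono2) (auto simp: D1 order_trans[OF zero_le_one D1])
      finally show ?thesis .
    qed
    finally show ?thesis using rho by (simp add: mult.commute mult_left_mono)
  qed
  then show ?thesis using Cpos by blast
qed

definition tm :: "complex \<Rightarrow> complex \<Rightarrow> complex \<Rightarrow> complex \<Rightarrow> complex \<Rightarrow> complex \<Rightarrow> complex \<Rightarrow> complex \<Rightarrow> nat \<times> nat \<Rightarrow> complex" where
  "tm q a a' b b' c x y = (\<lambda>(m, n).
        qpoch a q m * qpoch a' q n * qpoch b q m * qpoch b' q n
        / (qpoch q q m * qpoch q q n * qpoch c q (m + n)) * x ^ m * y ^ n)"

lemma qAppell3_tm: "qAppell3 q a a' b b' c x y = infsum (tm q a a' b b' c x y) UNIV"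
  unfolding qAppell3_def tm_def by simp

lemma geom2_summable:
  fixes X Y :: real
  assumes "0 \<le> X" "X < 1" "0 \<le> Y" "Y < 1"
  shows "(\<lambda>(m::nat, n::nat). X ^ m * Y ^ n) summable_on UNIV"
proof -
  have hY: "((\<lambda>n. Y ^ n) has_sum (1 / (1 - Y))) UNIV"
    by (rule sums_nonneg_imp_has_sum) (use assms geometric_sums[of Y] in auto)
  have hX: "(\<lambda>m. X ^ m) summable_on UNIV"
    by (rule has_sum_imp_summable, rule sums_nonneg_imp_has_sum) (use assms geometric_sums[of X] in auto)
  have "(\<lambda>p. X ^ fst p * Y ^ snd p) summable_on Sigma UNIV (\<lambda>_. UNIV)"
  proof (rule summable_on_SigmaI[where g = "\<lambda>m. X ^ m * (1 / (1 - Y))"])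
    show "((\<lambda>n. X ^ fst (m, n) * Y ^ snd (m, n)) has_sum X ^ m * (1 / (1 - Y))) UNIV" for m
      using has_sum_cmult_right[OF hY, of "X ^ m"] by simp
    show "(\<lambda>m. X ^ m * (1 / (1 - Y))) summable_on UNIV"
      using summable_on_cmult_left[OF hX, of "1 / (1 - Y)"] by simp
  qed (use assms in auto)
  then show ?thesis by (simp add: case_prod_beta')
qed

context
  fixes q :: complex
  assumes q0: "0 < norm q" and q1: "norm q < 1"
begin

lemma qpow_lim: "(\<lambda>j. \<alpha> * q ^ j) \<longlonglongrightarrow> 0"
  using tendsto_mult_right_zero[OF LIMSEQ_power_zero[OF q1]] by simp

lemma qpoch_bound:
  assumes "\<rho> > 1"
  shows "\<exists>C>0. \<forall>k. norm (qpoch \<alpha> q k) \<le> C * \<rho> ^ k"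
proof -
  have "(\<lambda>j. 1 - \<alpha> * q ^ j) \<longlonglongrightarrow> 1 - 0"
    by (intro tendsto_intros qpow_lim)
  then show ?thesis using prod_growth[OF _ assms] unfolding qpoch_def by simp
qed

lemma qpoch_inv_bound:
  assumes "\<rho> > 1" and nz: "\<forall>j. \<alpha> * q ^ j \<noteq> 1"
  shows "\<exists>C>0. \<forall>k. norm (inverse (qpoch \<alpha> q k)) \<le> C * \<rho> ^ k"
proof -
  have "(\<lambda>j. inverse (1 - \<alpha> * q ^ j)) \<longlonglongrightarrow> inverse (1 - 0)"
    by (intro tendsto_intros qpow_lim) simp
  then obtain C where "C > 0" "\<forall>k. norm (\<Prod>j<k. inverse (1 - \<alpha> * q ^ j)) \<le> C * \<rho> ^ k"
    using prod_growth[OF _ assms(1)] by auto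
  moreover have "(\<Prod>j<k. inverse (1 - \<alpha> * q ^ j)) = inverse (qpoch \<alpha> q k)" for k
    unfolding qpoch_def using prod_inversef[of "\<lambda>j. 1 - \<alpha> * q ^ j" "{..<k}"] by (simp add: o_def)
  ultimately show ?thesis by auto
qed

lemma qq_nz: "\<forall>j. q * q ^ j \<noteq> 1"
proof
  fix j :: nat
  have "norm (q * q ^ j) < 1"
  proof -
    have "norm q ^ j \<le> 1" using q1 by (simp add: power_le_one)
    then have "norm q * norm q ^ j < 1" using q1 q0
      by (smt (verit) mult_left_le norm_ge_zero)
    then show ?thesis by (simp add: norm_mult norm_power)
  qed
  then show "q * q ^ j \<noteq> 1" by auto
qed

lemma qpoch_nz: "(\<forall>j. \<alpha> * q ^ j \<noteq> 1) \<Longrightarrow> qpoch \<alpha> q k \<noteq> 0"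
  unfolding qpoch_def by auto

end


lemma tm_summable:
  assumes q0: "0 < norm q" and q1: "norm q < 1"
    and x1: "norm x < 1" and y1: "norm y < 1"
    and nz: "\<forall>j. c * q ^ j \<noteq> 1"
  shows "tm q a a' b b' c x y summable_on UNIV"
proof -
  define r where "r = max (norm x) (norm y)"
  define u where "u = (1 + r) / 2"
  define \<rho> where "\<rho> = root 4 (1 / u)"
  have r0: "0 \<le> r" and r1: "r < 1" using x1 y1 by (auto simp: r_def le_max_iff_disj)
  have u: "r < u" "u < 1" "0 < u" using r0 r1 by (auto simp: u_def)
  have rho1: "\<rho> > 1" using u by (simp add: \<rho>_def)
  have rho4: "\<rho> ^ 4 = 1 / u" using u by (simp add: \<rho>_def)
  obtain C1 where C1: "C1 > 0" "\<forall>k. norm (qpoch a q k) \<le> C1 * \<rho> ^ k"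
    using qpoch_bound[OF q0 q1 rho1] by blast
  obtain C2 where C2: "C2 > 0" "\<forall>k. norm (qpoch a' q k) \<le> C2 * \<rho> ^ k"
    using qpoch_bound[OF q0 q1 rho1] by blast
  obtain C3 where C3: "C3 > 0" "\<forall>k. norm (qpoch b q k) \<le> C3 * \<rho> ^ k"
    using qpoch_bound[OF q0 q1 rho1] by blast
  obtain C4 where C4: "C4 > 0" "\<forall>k. norm (qpoch b' q k) \<le> C4 * \<rho> ^ k"
    using qpoch_bound[OF q0 q1 rho1] by blast
  obtain C5 where C5: "C5 > 0" "\<forall>k. norm (inverse (qpoch q q k)) \<le> C5 * \<rho> ^ k"
    using qpoch_inv_bound[OF q0 q1 rho1 qq_nz[OF q0 q1]] by blast
  obtain C7 where C7: "C7 > 0" "\<forall>k. norm (inverse (qpoch c q k)) \<le> C7 * \<rho> ^ k"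
    using qpoch_inv_bound[OF q0 q1 rho1 nz] by blast
  define K where "K = C1 * C2 * C3 * C4 * C5 * C5 * C7"
  define X where "X = \<rho> ^ 4 * norm x"
  define Y where "Y = \<rho> ^ 4 * norm y"
  have "norm x \<le> r" "norm y \<le> r" by (auto simp: r_def)
  then have xu: "norm x < u" and yu: "norm y < u" using u by auto
  have X: "0 \<le> X" "X < 1"
    using u xu by (auto simp: X_def rho4 field_simps)
  have Y: "0 \<le> Y" "Y < 1"
    using u yu by (auto simp: Y_def rho4 field_simps)
  have bound: "norm (tm q a a' b b' c x y p) \<le> K * (case p of (m, n) \<Rightarrow> X ^ m * Y ^ n)" for p
  proof (cases p)
    case (Pair m n)
    have "norm (tm q a a' b b' c x y p) =
      norm (qpoch a q m) * norm (qpoch a' q n) * norm (qpoch b q m) * norm (qpoch b' q n)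
      * norm (inverse (qpoch q q m)) * norm (inverse (qpoch q q n)) * norm (inverse (qpoch c q (m + n)))
      * norm x ^ m * norm y ^ n"
      by (simp add: Pair tm_def norm_mult norm_divide norm_power norm_inverse divide_inverse mult_ac)
    also have "\<dots> \<le> (C1 * \<rho> ^ m) * (C2 * \<rho> ^ n) * (C3 * \<rho> ^ m) * (C4 * \<rho> ^ n)
      * (C5 * \<rho> ^ m) * (C5 * \<rho> ^ n) * (C7 * \<rho> ^ (m + n)) * norm x ^ m * norm y ^ n"
      using C1 C2 C3 C4 C5 C7 rho1
      by (intro mult_mono mult_nonneg_nonneg zero_le_power order_refl) auto
    also have "\<dots> = K * ((\<rho> ^ 4 * norm x) ^ m * (\<rho> ^ 4 * norm y) ^ n)"
    proof -
      have e: "(\<rho> ^ 4 * z) ^ k = \<rho> ^ k * \<rho> ^ k * \<rho> ^ k * \<rho> ^ k * z ^ k" for z :: real and k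
      proof -
        have "(\<rho> ^ 4) ^ k = (\<rho> ^ k) ^ 4" by (simp add: power_mult[symmetric] mult.commute)
        then show ?thesis by (simp add: power_mult_distrib power4_eq_xxxx)
      qed
      show ?thesis by (simp only: e K_def power_add) (simp add: mult_ac)
    qed
    finally show ?thesis by (simp add: Pair X_def Y_def)
  qed
  have "(\<lambda>p. K * (case p of (m, n) \<Rightarrow> X ^ m * Y ^ n)) summable_on UNIV"
    using summable_on_cmult_right[OF geom2_summable[OF X Y]] by simp
  then have "(\<lambda>p. norm (tm q a a' b b' c x y p)) summable_on UNIV"
    by (rule summable_on_comparison_test) (use bound in auto)
  then show ?thesis by (rule abs_summable_summable)
qed


lemma qpoch_Suc: "qpoch z q (Suc m) = qpoch z q m * (1 - z * q ^ m)"
  by (simp add: qpoch_def)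

lemma qpoch_Suc_shift: "qpoch z q (Suc m) = (1 - z) * qpoch (z * q) q m"
  unfolding qpoch_def by (subst prod.lessThan_Suc_shift) (simp add: mult_ac)

lemma qpoch_diff: "qpoch (z * q) q (Suc m) - qpoch z q (Suc m) = z * (1 - q * q ^ m) * qpoch (z * q) q m"
proof -
  have 1: "qpoch (z * q) q (Suc m) = qpoch (z * q) q m * (1 - z * q * q ^ m)" by (rule qpoch_Suc)
  have 2: "qpoch z q (Suc m) = (1 - z) * qpoch (z * q) q m" by (rule qpoch_Suc_shift)
  show ?thesis unfolding 1 2 by (simp add: algebra_simps)
qed

lemma fld1:
  fixes Aq A' Bb Bq B' P s Qn g R \<alpha> \<beta> x y X Y :: complex
  assumes "P \<noteq> 0" "s \<noteq> 0" "g \<noteq> 0" "R \<noteq> 0" "Qn \<noteq> 0"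
  shows "((1 - \<alpha>) * Aq) * A' * (Bb + \<beta> * s * Bq) * B' / ((P * s) * Qn * (g * R)) * (X * x) * Y
    = ((1 - \<alpha>) * Aq) * A' * Bb * B' / ((P * s) * Qn * (g * R)) * (X * x) * Y
      + \<beta> * x * (1 - \<alpha>) / g * (Aq * A' * Bq * B' / (P * Qn * R) * X * Y)"
proof -
  have "((1 - \<alpha>) * Aq) * A' * (Bb + \<beta> * s * Bq) * B' / ((P * s) * Qn * (g * R)) * (X * x) * Y
    = ((1 - \<alpha>) * Aq) * A' * Bb * B' / ((P * s) * Qn * (g * R)) * (X * x) * Y
      + ((1 - \<alpha>) * Aq) * A' * (\<beta> * s * Bq) * B' / ((P * s) * Qn * (g * R)) * (X * x) * Y"
    by (simp add: distrib_left distrib_right add_divide_distrib)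
  also have "((1 - \<alpha>) * Aq) * A' * (\<beta> * s * Bq) * B' / ((P * s) * Qn * (g * R)) * (X * x) * Y
     = \<beta> * x * (1 - \<alpha>) / g * (Aq * A' * Bq * B' / (P * Qn * R) * X * Y)"
    using assms by (simp add: field_simps)
  finally show ?thesis .
qed


lemma tm_rel:
  assumes qq: "\<forall>j. q * q ^ j \<noteq> 1" and nz: "\<forall>j. \<gamma> * q ^ j \<noteq> 1"
  shows "tm q \<alpha> a' (\<beta> * q) b' \<gamma> x y (m, n) = tm q \<alpha> a' \<beta> b' \<gamma> x y (m, n)
     + (if m = 0 then 0 else \<beta> * x * (1 - \<alpha>) / (1 - \<gamma>) * tm q (\<alpha> * q) a' (\<beta> * q) b' (\<gamma> * q) x y (m - 1, n))"
proof (cases m)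
  case 0
  then show ?thesis by (simp add: tm_def qpoch_def)
next
  case (Suc k)
  have g1: "1 - \<gamma> \<noteq> 0" using nz[rule_format, of 0] by auto
  have Qk: "qpoch q q k \<noteq> 0" "qpoch q q n \<noteq> 0" "1 - q * q ^ k \<noteq> 0"
    using qq unfolding qpoch_def by (auto simp del: power_Suc)
  have Gk: "qpoch (\<gamma> * q) q (k + n) \<noteq> 0"
  proof -
    have "\<gamma> * q * q ^ j \<noteq> 1" for j using nz[rule_format, of "Suc j"] by (simp add: mult_ac)
    then show ?thesis unfolding qpoch_def by auto
  qed
  have D: "qpoch (\<beta> * q) q (Suc k) = qpoch \<beta> q (Suc k) + \<beta> * (1 - q * q ^ k) * qpoch (\<beta> * q) q k"
    using qpoch_diff[of \<beta> q k] by (simp add: algebra_simps)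
  have E: "qpoch q q (Suc k) = qpoch q q k * (1 - q * q ^ k)" by (simp add: qpoch_Suc)
  have F: "qpoch \<gamma> q (Suc k + n) = (1 - \<gamma>) * qpoch (\<gamma> * q) q (k + n)"
    using qpoch_Suc_shift[of \<gamma> q "k + n"] by simp
  have A: "qpoch \<alpha> q (Suc k) = (1 - \<alpha>) * qpoch (\<alpha> * q) q k" by (rule qpoch_Suc_shift)
  have X: "x ^ Suc k = x ^ k * x" by simp
  have ifF: "(if Suc k = 0 then 0 else Z) = Z" for Z :: complex by simp
  show ?thesis
    unfolding Suc tm_def prod.case D E F A X diff_Suc_1 ifF
    by (rule fld1[OF Qk(1) Qk(3) g1 Gk Qk(2)])
qed


lemma nz_shift: "\<forall>j. (\<gamma>::complex) * q ^ j \<noteq> 1 \<Longrightarrow> \<forall>j. \<gamma> * q * q ^ j \<noteq> 1"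
proof
  fix j assume a: "\<forall>j. \<gamma> * q ^ j \<noteq> 1"
  have "\<gamma> * q ^ Suc j \<noteq> 1" using a by blast
  then show "\<gamma> * q * q ^ j \<noteq> 1" by (simp add: mult.assoc)
qed

lemma T_rel:
  assumes q0: "0 < norm q" and q1: "norm q < 1"
    and x1: "norm x < 1" and y1: "norm y < 1"
    and nz: "\<forall>j. \<gamma> * q ^ j \<noteq> 1"
  shows "qAppell3 q \<alpha> a' (\<beta> * q) b' \<gamma> x y = qAppell3 q \<alpha> a' \<beta> b' \<gamma> x y
     + \<beta> * x * (1 - \<alpha>) / (1 - \<gamma>) * qAppell3 q (\<alpha> * q) a' (\<beta> * q) b' (\<gamma> * q) x y"
proof -
  define f1 where "f1 = tm q \<alpha> a' \<beta> b' \<gamma> x y"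
  define f2 where "f2 = tm q (\<alpha> * q) a' (\<beta> * q) b' (\<gamma> * q) x y"
  define C where "C = \<beta> * x * (1 - \<alpha>) / (1 - \<gamma>)"
  have h1: "(f1 has_sum infsum f1 UNIV) UNIV"
    unfolding f1_def by (rule has_sum_infsum, rule tm_summable[OF q0 q1 x1 y1 nz])
  have h2: "(f2 has_sum infsum f2 UNIV) UNIV"
    unfolding f2_def by (rule has_sum_infsum, rule tm_summable[OF q0 q1 x1 y1 nz_shift[OF nz]])
  define g where "g = (\<lambda>p. if fst p = 0 then 0 else f2 (fst p - 1, snd p))"
  define h where "h = (\<lambda>p::nat \<times> nat. (Suc (fst p), snd p))"
  have inj: "inj_on h UNIV" unfolding h_def inj_on_def by auto
  have gh: "g \<circ> h = f2" unfolding g_def h_def by (auto simp: fun_eq_iff)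
  have "(g has_sum infsum f2 UNIV) (h ` UNIV)"
    using has_sum_reindex[OF inj, of g] gh h2 by simp
  moreover have "h ` UNIV = {p. fst p \<noteq> 0}"
  proof
    show "h ` UNIV \<subseteq> {p. fst p \<noteq> 0}" unfolding h_def by auto
    show "{p. fst p \<noteq> 0} \<subseteq> h ` UNIV"
    proof
      fix p :: "nat \<times> nat" assume "p \<in> {p. fst p \<noteq> 0}"
      then have "p = h (fst p - 1, snd p)" unfolding h_def by (cases p) auto
      then show "p \<in> h ` UNIV" by blast
    qed
  qed
  ultimately have "(g has_sum infsum f2 UNIV) {p. fst p \<noteq> 0}" by simp
  then have hg: "(g has_sum infsum f2 UNIV) UNIV"
    by (rule has_sum_cong_neutral[THEN iffD1, rotated -1]) (auto simp: g_def)
  have "((\<lambda>p. f1 p + C * g p) has_sum (infsum f1 UNIV + C * infsum f2 UNIV)) UNIV"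
    by (intro has_sum_add h1 has_sum_cmult_right hg)
  moreover have "(\<lambda>p. f1 p + C * g p) = tm q \<alpha> a' (\<beta> * q) b' \<gamma> x y"
  proof
    fix p :: "nat \<times> nat"
    obtain m n where p: "p = (m, n)" by fastforce
    show "f1 p + C * g p = tm q \<alpha> a' (\<beta> * q) b' \<gamma> x y p"
      unfolding p f1_def g_def C_def f2_def
      using tm_rel[OF qq_nz[OF q0 q1] nz, of \<alpha> a' \<beta> b' x y m n] by simp
  qed
  ultimately have "infsum (tm q \<alpha> a' (\<beta> * q) b' \<gamma> x y) UNIV = infsum f1 UNIV + C * infsum f2 UNIV"
    by (simp add: infsumI)
  then show ?thesis unfolding qAppell3_tm f1_def f2_def C_def .
qed


definition qb :: "complex \<Rightarrow> nat \<Rightarrow> nat \<Rightarrow> complex" where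
  "qb q n k = (if k \<le> n then qbinom q n k else 0)"

lemma qpochqq_nz: assumes qq: "\<forall>j. q * q ^ j \<noteq> 1" shows "qpoch q q k \<noteq> 0"
proof -
  have "1 - q * q ^ j \<noteq> 0" for j using qq by auto
  then show ?thesis unfolding qpoch_def by (subst prod_zero_iff) blast+
qed

lemma qb_0: assumes "\<forall>j. q * q ^ j \<noteq> 1" shows "qb q n 0 = 1"
proof -
  have a: "qpoch q q n \<noteq> 0" by (rule qpochqq_nz[OF assms])
  have b: "qpoch q q 0 = 1" by (simp add: qpoch_def)
  show ?thesis using a by (simp add: qb_def qbinom_def b)
qed

lemma qb_nn: assumes "\<forall>j. q * q ^ j \<noteq> 1" shows "qb q n n = 1"
proof -
  have a: "qpoch q q n \<noteq> 0" by (rule qpochqq_nz[OF assms])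
  have b: "qpoch q q 0 = 1" by (simp add: qpoch_def)
  show ?thesis using a by (simp add: qb_def qbinom_def b)
qed

lemma qb_gt: "n < k \<Longrightarrow> qb q n k = 0" by (simp add: qb_def)

lemma qb_pascal:
  assumes qq: "\<forall>j. (q::complex) * q ^ j \<noteq> 1"
  shows "qb q (Suc n) (Suc k) = q ^ Suc k * qb q n (Suc k) + qb q n k \<and>
         qb q (Suc n) (Suc k) = qb q n (Suc k) + q ^ (n - k) * qb q n k"
proof (cases "k < n")
  case True
  then obtain d where n: "n = Suc (k + d)" by (metis less_imp_Suc_add)
  define Pn where "Pn = qpoch q q (Suc (k + d))"
  define Pk where "Pk = qpoch q q k"
  define Pd where "Pd = qpoch q q d"
  have nz: "Pn \<noteq> 0" "Pk \<noteq> 0" "Pd \<noteq> 0" "1 - q * q ^ k \<noteq> 0" "1 - q * q ^ d \<noteq> 0"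
    using qpochqq_nz[OF qq] qq unfolding Pn_def Pk_def Pd_def by auto
  have e1: "qpoch q q (Suc (Suc (k + d))) = Pn * (1 - q * q ^ Suc (k + d))"
    unfolding Pn_def by (rule qpoch_Suc)
  have e2: "qpoch q q (Suc k) = Pk * (1 - q * q ^ k)" unfolding Pk_def by (rule qpoch_Suc)
  have e3: "qpoch q q (Suc d) = Pd * (1 - q * q ^ d)" unfolding Pd_def by (rule qpoch_Suc)
  have d1: "Suc (Suc (k + d)) - Suc k = Suc d" "Suc (k + d) - Suc k = d" "Suc (k + d) - k = Suc d" by auto
  have l: "qb q (Suc n) (Suc k) = Pn * (1 - q * q ^ Suc (k + d)) / (Pk * (1 - q * q ^ k) * (Pd * (1 - q * q ^ d)))"
    unfolding qb_def qbinom_def n using d1 e1 e2 e3 by simp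
  have r1: "qb q n (Suc k) = Pn / (Pk * (1 - q * q ^ k) * Pd)"
    unfolding qb_def qbinom_def n using d1 e2 by (simp add: Pn_def Pd_def)
  have r2: "qb q n k = Pn / (Pk * (Pd * (1 - q * q ^ d)))"
    unfolding qb_def qbinom_def n using d1 e3 by (simp add: Pn_def Pk_def)
  have nk: "n - k = Suc d" using n by simp
  define u where "u = q * q ^ k"
  define v where "v = q * q ^ d"
  have uv: "q * q ^ Suc (k + d) = u * v" unfolding u_def v_def by (simp add: power_add mult_ac)
  have qu: "q ^ Suc k = u" "q ^ Suc d = v" unfolding u_def v_def by simp_all
  have u1: "1 - u \<noteq> 0" and v1: "1 - v \<noteq> 0" using nz unfolding u_def v_def by auto
  have F: "Pn * (1 - (1 - U) * (1 - V)) / (Pk * U * (Pd * V)) = (1 - U) * (Pn / (Pk * U * Pd)) + Pn / (Pk * (Pd * V))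
     \<and> Pn * (1 - (1 - U) * (1 - V)) / (Pk * U * (Pd * V)) = Pn / (Pk * U * Pd) + (1 - V) * (Pn / (Pk * (Pd * V)))"
    if "U \<noteq> 0" "V \<noteq> 0" for U V
    using nz(1-3) that by (simp add: field_simps)
  have F1: "Pn * (1 - u * v) / (Pk * (1 - u) * (Pd * (1 - v))) = u * (Pn / (Pk * (1 - u) * Pd)) + Pn / (Pk * (Pd * (1 - v)))"
    using F[OF u1 v1, THEN conjunct1] by simp
  have F2: "Pn * (1 - u * v) / (Pk * (1 - u) * (Pd * (1 - v))) = Pn / (Pk * (1 - u) * Pd) + v * (Pn / (Pk * (Pd * (1 - v))))"
    using F[OF u1 v1, THEN conjunct2] by simp
  show ?thesis unfolding l r1 r2 nk uv qu using F1 F2 unfolding u_def v_def by simp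
next
  case False
  then show ?thesis
  proof (cases "k = n")
    case True
    then show ?thesis using qb_nn[OF qq] by (simp add: qb_gt)
  next
    case False
    then show ?thesis using \<open>\<not> k < n\<close> by (simp add: qb_gt)
  qed
qed


lemma sum_pascal1:
  assumes qq: "\<forall>j. (q::complex) * q ^ j \<noteq> 1"
  shows "(\<Sum>k\<le>n. qb q n k * q ^ k * V k) + (\<Sum>k\<le>n. qb q n k * V (Suc k))
       = (\<Sum>k\<le>Suc n. qb q (Suc n) k * V k)"
proof -
  have 1: "(\<Sum>k\<le>Suc n. qb q (Suc n) k * V k) = V 0 + (\<Sum>k\<le>n. qb q (Suc n) (Suc k) * V (Suc k))"
    by (subst sum.atMost_Suc_shift) (simp add: qb_0[OF qq])
  have 2: "(\<Sum>k\<le>n. qb q (Suc n) (Suc k) * V (Suc k))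
     = (\<Sum>k\<le>n. q ^ Suc k * qb q n (Suc k) * V (Suc k)) + (\<Sum>k\<le>n. qb q n k * V (Suc k))"
    by (simp add: qb_pascal[OF qq, THEN conjunct1] distrib_right sum.distrib)
  have 3: "(\<Sum>k\<le>n. qb q n k * q ^ k * V k) = (\<Sum>k\<le>Suc n. qb q n k * q ^ k * V k)"
    by (simp add: qb_gt)
  have 4: "(\<Sum>k\<le>Suc n. qb q n k * q ^ k * V k) = V 0 + (\<Sum>k\<le>n. q ^ Suc k * qb q n (Suc k) * V (Suc k))"
    by (subst sum.atMost_Suc_shift) (simp add: qb_0[OF qq] mult_ac)
  show ?thesis unfolding 1 2 3 4 by (simp add: add.assoc)
qed

lemma sum_pascal2:
  assumes qq: "\<forall>j. (q::complex) * q ^ j \<noteq> 1"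
  shows "(\<Sum>k\<le>n. qb q n k * V k) + (\<Sum>k\<le>n. qb q n k * q ^ (n - k) * V (Suc k))
       = (\<Sum>k\<le>Suc n. qb q (Suc n) k * V k)"
proof -
  have 1: "(\<Sum>k\<le>Suc n. qb q (Suc n) k * V k) = V 0 + (\<Sum>k\<le>n. qb q (Suc n) (Suc k) * V (Suc k))"
    by (subst sum.atMost_Suc_shift) (simp add: qb_0[OF qq])
  have 2: "(\<Sum>k\<le>n. qb q (Suc n) (Suc k) * V (Suc k))
     = (\<Sum>k\<le>n. qb q n (Suc k) * V (Suc k)) + (\<Sum>k\<le>n. qb q n k * q ^ (n - k) * V (Suc k))"
    unfolding sum.distrib[symmetric]
    by (rule sum.cong) (simp_all add: qb_pascal[OF qq, THEN conjunct2] distrib_right)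
  have 3: "(\<Sum>k\<le>n. qb q n k * V k) = (\<Sum>k\<le>Suc n. qb q n k * V k)"
    by (simp add: qb_gt)
  have 4: "(\<Sum>k\<le>Suc n. qb q n k * V k) = V 0 + (\<Sum>k\<le>n. qb q n (Suc k) * V (Suc k))"
    by (subst sum.atMost_Suc_shift) (simp add: qb_0[OF qq])
  show ?thesis unfolding 1 2 3 4 by (simp add: add.assoc)
qed


lemma choose2_Suc: "(Suc k choose 2) = (k choose 2) + k"
  by (simp add: numeral_2_eq_2)

lemma ident1:
  assumes q0: "0 < norm q" and q1: "norm q < 1"
    and x1: "norm x < 1" and y1: "norm y < 1"
  shows "\<forall>a b c. (\<forall>j. c * q ^ j \<noteq> 1) \<longrightarrow> qAppell3 q a a' (b * q ^ n) b' c x y =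
           (\<Sum>k\<le>n. qb q n k * q ^ (2 * (k choose 2)) * (b * x) ^ k * qpoch a q k / qpoch c q k
              * qAppell3 q (a * q ^ k) a' (b * q ^ k) b' (c * q ^ k) x y)"
proof (induction n)
  case 0
  have qq: "\<forall>j. q * q ^ j \<noteq> 1" by (rule qq_nz[OF q0 q1])
  show ?case by (simp add: qb_0[OF qq] qpoch_def binomial_eq_0)
next
  case (Suc n)
  have qq: "\<forall>j. q * q ^ j \<noteq> 1" by (rule qq_nz[OF q0 q1])
  show ?case
  proof (intro allI impI)
    fix a b c :: complex
    assume nz: "\<forall>j. c * q ^ j \<noteq> 1"
    define W where "W k = q ^ (2 * (k choose 2)) * (b * x) ^ k * qpoch a q k / qpoch c q k" for k
    define Tk where "Tk k = qAppell3 q (a * q ^ k) a' (b * q ^ k) b' (c * q ^ k) x y" for k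
    define D where "D k = b * q ^ k * x * (1 - a * q ^ k) / (1 - c * q ^ k)" for k
    have nzk: "\<forall>j. c * q ^ k * q ^ j \<noteq> 1" for k
      using nz by (metis mult.assoc power_add)
    have rel: "qAppell3 q (a * q ^ k) a' (b * q * q ^ k) b' (c * q ^ k) x y = Tk k + D k * Tk (Suc k)" for k
    proof -
      have "b * q * q ^ k = (b * q ^ k) * q" by (simp add: mult_ac)
      moreover have "a * q ^ k * q = a * q ^ Suc k" "b * q ^ k * q = b * q ^ Suc k" "c * q ^ k * q = c * q ^ Suc k"
        by (simp_all add: mult_ac)
      ultimately show ?thesis
        using T_rel[OF q0 q1 x1 y1 nzk[of k], of "a * q ^ k" a' "b * q ^ k" b']
        unfolding Tk_def D_def by (simp add: mult_ac)
    qed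
    have W1: "z * q ^ (2 * (k choose 2)) * (b * q * x) ^ k * qpoch a q k / qpoch c q k = z * (q ^ k * W k)" for k z
      unfolding W_def by (simp add: power_mult_distrib mult_ac)
    have W2: "q ^ k * W k * D k = W (Suc k)" for k
    proof -
      have e: "q ^ (2 * ((k choose 2) + k)) = q ^ (2 * (k choose 2)) * q ^ k * q ^ k"
        by (simp add: power_add[symmetric] algebra_simps)
      show ?thesis unfolding W_def D_def choose2_Suc e
        by (simp add: qpoch_Suc power_mult_distrib)
    qed
    have "qAppell3 q a a' (b * q ^ Suc n) b' c x y = qAppell3 q a a' ((b * q) * q ^ n) b' c x y"
      by (simp add: mult_ac)
    also have "\<dots> = (\<Sum>k\<le>n. qb q n k * (q ^ k * W k) * (Tk k + D k * Tk (Suc k)))"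
    proof -
      have "qAppell3 q a a' ((b * q) * q ^ n) b' c x y = (\<Sum>k\<le>n. qb q n k * q ^ (2 * (k choose 2)) * (b * q * x) ^ k * qpoch a q k / qpoch c q k
              * qAppell3 q (a * q ^ k) a' (b * q * q ^ k) b' (c * q ^ k) x y)"
        using Suc.IH nz by blast
      then show ?thesis by (simp only: W1 rel)
    qed
    also have "\<dots> = (\<Sum>k\<le>n. qb q n k * q ^ k * (W k * Tk k)) + (\<Sum>k\<le>n. qb q n k * (W (Suc k) * Tk (Suc k)))"
      unfolding sum.distrib[symmetric] W2[symmetric] by (rule sum.cong) (simp_all add: algebra_simps)
    also have "\<dots> = (\<Sum>k\<le>Suc n. qb q (Suc n) k * (W k * Tk k))"
      by (rule sum_pascal1[OF qq])
    finally show "qAppell3 q a a' (b * q ^ Suc n) b' c x y = (\<Sum>k\<le>Suc n. qb q (Suc n) k * q ^ (2 * (k choose 2)) * (b * x) ^ k * qpoch a q k / qpoch c q k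
              * qAppell3 q (a * q ^ k) a' (b * q ^ k) b' (c * q ^ k) x y)"
      unfolding W_def Tk_def by (simp add: mult_ac)
  qed
qed


lemma pw: "(q::complex) \<noteq> 0 \<Longrightarrow> i = j + l \<Longrightarrow> q powi i = q powi j * q powi l"
  by (simp add: power_int_add)

lemma fld2:
  fixes Q P1 P0 iq X A C \<alpha> \<gamma> :: complex
  assumes e: "Q * P1 = P0 * iq"
  shows "P0 * X ^ k * A / C * (X * iq * \<alpha> / \<gamma>) = Q * (P1 * X ^ Suc k * (A * \<alpha>) / (C * \<gamma>))"
proof -
  have "Q * (P1 * X ^ Suc k * (A * \<alpha>) / (C * \<gamma>)) = (Q * P1) * (X ^ Suc k * (A * \<alpha>) / (C * \<gamma>))"
    by (simp add: mult.assoc)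
  also have "\<dots> = P0 * iq * (X ^ Suc k * (A * \<alpha>) / (C * \<gamma>))" by (simp only: e)
  also have "\<dots> = P0 * X ^ k * A / C * (X * iq * \<alpha> / \<gamma>)"
    by (simp add: divide_inverse mult_ac)
  finally show ?thesis by (rule sym)
qed

lemma ident2:
  assumes q0: "0 < norm q" and q1: "norm q < 1"
    and x1: "norm x < 1" and y1: "norm y < 1"
  shows "\<forall>a b c. (\<forall>j. c * q ^ j \<noteq> 1) \<longrightarrow> qAppell3 q a a' (b * inverse q ^ n) b' c x y =
           (\<Sum>k\<le>n. qb q n k * q powi (int (k choose 2) - int n * int k) * (- b * x) ^ k
              * qpoch a q k / qpoch c q k
              * qAppell3 q (a * q ^ k) a' b b' (c * q ^ k) x y)"
proof (induction n)
  case 0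
  have qq: "\<forall>j. q * q ^ j \<noteq> 1" by (rule qq_nz[OF q0 q1])
  show ?case by (simp add: qb_0[OF qq] qpoch_def binomial_eq_0)
next
  case (Suc n)
  have qq: "\<forall>j. q * q ^ j \<noteq> 1" by (rule qq_nz[OF q0 q1])
  have qn0: "q \<noteq> 0" using q0 by auto
  show ?case
  proof (intro allI impI)
    fix a b c :: complex
    assume nz: "\<forall>j. c * q ^ j \<noteq> 1"
    define U where "U k = q powi (int (k choose 2) - int (Suc n) * int k) * (- b * x) ^ k * qpoch a q k / qpoch c q k" for k
    define Tk where "Tk k = qAppell3 q (a * q ^ k) a' b b' (c * q ^ k) x y" for k
    define D where "D k = b * inverse q * x * (1 - a * q ^ k) / (1 - c * q ^ k)" for k
    have nzk: "\<forall>j. c * q ^ k * q ^ j \<noteq> 1" for k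
      using nz by (metis mult.assoc power_add)
    have rel: "qAppell3 q (a * q ^ k) a' (b * inverse q) b' (c * q ^ k) x y = Tk k - D k * Tk (Suc k)" for k
    proof -
      have e: "b * inverse q * q = b" using qn0 by simp
      have "a * q ^ k * q = a * q ^ Suc k" "c * q ^ k * q = c * q ^ Suc k"
        by (simp_all add: mult_ac)
      then show ?thesis
        using T_rel[OF q0 q1 x1 y1 nzk[of k], of "a * q ^ k" a' "b * inverse q" b']
        unfolding Tk_def D_def e by (simp add: mult_ac)
    qed
    have W1: "z * q powi (int (k choose 2) - int n * int k) * (- (b * inverse q) * x) ^ k * qpoch a q k / qpoch c q k = z * U k" for k z
    proof -
      have "q powi (int (k choose 2) - int (Suc n) * int k) = q powi (int (k choose 2) - int n * int k) * q powi (- int k)"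
        by (rule pw[OF qn0]) (simp add: algebra_simps)
      moreover have "q powi (- int k) = inverse q ^ k" by (simp add: power_int_minus power_inverse)
      moreover have "(- (b * inverse q) * x) ^ k = (- b * x) ^ k * inverse q ^ k"
      proof -
        have "- (b * inverse q) * x = (- b * x) * inverse q" by simp
        then show ?thesis by (simp only: power_mult_distrib)
      qed
      ultimately show ?thesis unfolding U_def by (simp add: mult_ac)
    qed
    have W2: "U k * (- D k) = q ^ (n - k) * U (Suc k)" if "k \<le> n" for k
    proof -
      have "q ^ (n - k) * q powi (int (Suc k choose 2) - int (Suc n) * int (Suc k))
          = q powi (int (n - k)) * q powi (int (Suc k choose 2) - int (Suc n) * int (Suc k))"
        by simp
      also have "\<dots> = q powi (int (n - k) + (int (Suc k choose 2) - int (Suc n) * int (Suc k)))"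
        by (simp add: power_int_add qn0)
      also have "\<dots> = q powi (int (k choose 2) - int (Suc n) * int k) * q powi (-1)"
        by (rule pw[OF qn0]) (use that in \<open>simp add: choose2_Suc of_nat_diff algebra_simps\<close>)
      finally have e: "q ^ (n - k) * q powi (int (Suc k choose 2) - int (Suc n) * int (Suc k))
          = q powi (int (k choose 2) - int (Suc n) * int k) * inverse q" by (simp add: power_int_minus)
      have X: "- (b * inverse q * x * (1 - a * q ^ k) / (1 - c * q ^ k)) = (- b * x) * inverse q * (1 - a * q ^ k) / (1 - c * q ^ k)"
        by simp
      show ?thesis
        unfolding U_def D_def X qpoch_Suc
        by (rule fld2[OF e])
    qed
    have "qAppell3 q a a' (b * inverse q ^ Suc n) b' c x y = qAppell3 q a a' ((b * inverse q) * inverse q ^ n) b' c x y"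
      by (simp add: mult_ac)
    also have "\<dots> = (\<Sum>k\<le>n. qb q n k * U k * (Tk k - D k * Tk (Suc k)))"
    proof -
      have "qAppell3 q a a' ((b * inverse q) * inverse q ^ n) b' c x y = (\<Sum>k\<le>n. qb q n k * q powi (int (k choose 2) - int n * int k) * (- (b * inverse q) * x) ^ k
              * qpoch a q k / qpoch c q k
              * qAppell3 q (a * q ^ k) a' (b * inverse q) b' (c * q ^ k) x y)"
        using Suc.IH nz by blast
      then show ?thesis by (simp only: W1 rel)
    qed
    also have "\<dots> = (\<Sum>k\<le>n. qb q n k * (U k * Tk k)) + (\<Sum>k\<le>n. qb q n k * q ^ (n - k) * (U (Suc k) * Tk (Suc k)))"
      unfolding sum.distrib[symmetric]
    proof (rule sum.cong)
      fix k assume "k \<in> {..n}"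
      then have w: "U k * (- D k) = q ^ (n - k) * U (Suc k)" by (intro W2) auto
      have "qb q n k * U k * (Tk k - D k * Tk (Suc k)) = qb q n k * (U k * Tk k) + qb q n k * (U k * (- D k)) * Tk (Suc k)"
        by (simp add: algebra_simps)
      also have "\<dots> = qb q n k * (U k * Tk k) + qb q n k * q ^ (n - k) * (U (Suc k) * Tk (Suc k))"
        unfolding w by (simp add: mult_ac)
      finally show "qb q n k * U k * (Tk k - D k * Tk (Suc k)) = qb q n k * (U k * Tk k) + qb q n k * q ^ (n - k) * (U (Suc k) * Tk (Suc k))" .
    qed simp
    also have "\<dots> = (\<Sum>k\<le>Suc n. qb q (Suc n) k * (U k * Tk k))"
      by (rule sum_pascal2[OF qq])
    finally show "qAppell3 q a a' (b * inverse q ^ Suc n) b' c x y =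
           (\<Sum>k\<le>Suc n. qb q (Suc n) k * q powi (int (k choose 2) - int (Suc n) * int k) * (- b * x) ^ k
              * qpoch a q k / qpoch c q k
              * qAppell3 q (a * q ^ k) a' b b' (c * q ^ k) x y)"
      unfolding U_def Tk_def by (simp add: mult_ac)
  qed
qed


theorem theorem12:
  fixes q a a' b b' c x y :: complex and n :: nat
  assumes "0 < norm q" and "norm q < 1"
    and "\<forall>j::nat. c * q ^ j \<noteq> 1"
    and "norm x < 1" and "norm y < 1"
  shows "qAppell3 q a a' (b * q ^ n) b' c x y =
           (\<Sum>k\<le>n. qbinom q n k * q ^ (2 * (k choose 2)) * (b * x) ^ k * qpoch a q k / qpoch c q k
              * qAppell3 q (a * q ^ k) a' (b * q ^ k) b' (c * q ^ k) x y)
       \<and> qAppell3 q a a' (b * inverse q ^ n) b' c x y =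
           (\<Sum>k\<le>n. qbinom q n k * q powi (int (k choose 2) - int n * int k) * (- b * x) ^ k
              * qpoch a q k / qpoch c q k
              * qAppell3 q (a * q ^ k) a' b b' (c * q ^ k) x y)"
proof
  have 1: "qAppell3 q a a' (b * q ^ n) b' c x y =
           (\<Sum>k\<le>n. qb q n k * q ^ (2 * (k choose 2)) * (b * x) ^ k * qpoch a q k / qpoch c q k
              * qAppell3 q (a * q ^ k) a' (b * q ^ k) b' (c * q ^ k) x y)"
    using ident1[OF assms(1,2,4,5)] assms(3) by blast
  also have "\<dots> = (\<Sum>k\<le>n. qbinom q n k * q ^ (2 * (k choose 2)) * (b * x) ^ k * qpoch a q k / qpoch c q k
              * qAppell3 q (a * q ^ k) a' (b * q ^ k) b' (c * q ^ k) x y)"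
    by (rule sum.cong) (simp_all add: qb_def)
  finally show "qAppell3 q a a' (b * q ^ n) b' c x y =
           (\<Sum>k\<le>n. qbinom q n k * q ^ (2 * (k choose 2)) * (b * x) ^ k * qpoch a q k / qpoch c q k
              * qAppell3 q (a * q ^ k) a' (b * q ^ k) b' (c * q ^ k) x y)" .
next
  have 2: "qAppell3 q a a' (b * inverse q ^ n) b' c x y =
           (\<Sum>k\<le>n. qb q n k * q powi (int (k choose 2) - int n * int k) * (- b * x) ^ k
              * qpoch a q k / qpoch c q k
              * qAppell3 q (a * q ^ k) a' b b' (c * q ^ k) x y)"
    using ident2[OF assms(1,2,4,5)] assms(3) by blast
  also have "\<dots> = (\<Sum>k\<le>n. qbinom q n k * q powi (int (k choose 2) - int n * int k) * (- b * x) ^ k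
              * qpoch a q k / qpoch c q k
              * qAppell3 q (a * q ^ k) a' b b' (c * q ^ k) x y)"
    by (rule sum.cong) (simp_all add: qb_def)
  finally show "qAppell3 q a a' (b * inverse q ^ n) b' c x y =
           (\<Sum>k\<le>n. qbinom q n k * q powi (int (k choose 2) - int n * int k) * (- b * x) ^ k
              * qpoch a q k / qpoch c q k
              * qAppell3 q (a * q ^ k) a' b b' (c * q ^ k) x y)" .
qed

end
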